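(* Let $\Omega = \bigcap_{j=1}^n \{x \in \mathbb{R}^d : a_j^{\intercal} x \leq b_j\}$ be a convex polytope of unit diameter containing the origin in its interior, where each $a_j$ is a unit vector and $b_j > 0$. Let $\varepsilon > 0$ and define the lifted body and the expanded body in $\mathbb{R}^{d+1}$ $$\widehat{\Omega} = \{(x;z) : z \geq 0,\ z \leq b_j - a_j^{\intercal}x \ \forall j\},\qquad \widehat{\Omega}^+ = \{(x;z) : z \leq b_j - a_j^{\intercal}x + \varepsilon \ \forall j\}.$$ Let $0 < \lambda_c < 1$. Then there is a constant $c > 0$ depending only on $\lambda_c$ and $d$ such that for every point $p \in \widehat{\Omega}$, the Macbeath ellipsoid $E^{\lambda_c}_{\widehat{\Omega}^+}(p)$ contains the Euclidean ball of radius $c\,\varepsilon$ centered at $p$.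
   Context: For a convex set $K$, a point $p \in K$ and $\lambda > 0$, the $\lambda$-scaled Macbeath region is $M^{\lambda}_K(p) = p + \lambda\big((K - p) \cap (p - K)\big)$, and the Macbeath ellipsoid $E^{\lambda}_K(p)$ is the maximum-volume ellipsoid contained in $M^{\lambda}_K(p)$ (it is centered at $p$). In the paper's data structure these ellipsoids (with centers in $\widehat{\Omega}$) are the covering ellipsoids. *)

theory Defs
  imports "HOL-Analysis.Analysis"
begin

definition is_ellipsoid :: "'a::euclidean_space set \<Rightarrow> bool" where
  "is_ellipsoid E \<longleftrightarrow>
     (\<exists>c (f :: 'a \<Rightarrow> 'a). linear f \<and> inj f \<and> E = (\<lambda>v. c + f v) ` cball 0 1)"

definition macbeath_region :: "real \<Rightarrow> 'a::euclidean_space set \<Rightarrow> 'a \<Rightarrow> 'a set" where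
  "macbeath_region lam K p =
     (\<lambda>v. p + lam *\<^sub>R v) ` ({v. p + v \<in> K} \<inter> {v. p - v \<in> K})"

definition max_vol_ellipsoid_in :: "'a::euclidean_space set \<Rightarrow> 'a set \<Rightarrow> bool" where
  "max_vol_ellipsoid_in E M \<longleftrightarrow>
     is_ellipsoid E \<and> E \<subseteq> M \<and>
     (\<forall>E'. is_ellipsoid E' \<and> E' \<subseteq> M \<longrightarrow> measure lebesgue E' \<le> measure lebesgue E)"

definition is_macbeath_ellipsoid :: "real \<Rightarrow> 'a::euclidean_space set \<Rightarrow> 'a \<Rightarrow> 'a set \<Rightarrow> bool" where
  "is_macbeath_ellipsoid lam K p E \<longleftrightarrow> max_vol_ellipsoid_in E (macbeath_region lam K p)"

end

theory Submission
  imports Defs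
begin

lemma perp_norm_le:
  fixes w e :: "'a::euclidean_space"
  assumes "norm e = 1"
  shows "norm (w - (w \<bullet> e) *\<^sub>R e) \<le> norm w"
proof -
  have ee: "e \<bullet> e = 1" using assms by (simp add: norm_eq_1)
  have "(norm (w - (w \<bullet> e) *\<^sub>R e))\<^sup>2 = (w - (w \<bullet> e) *\<^sub>R e) \<bullet> (w - (w \<bullet> e) *\<^sub>R e)"
    by (simp add: power2_norm_eq_inner)
  also have "\<dots> = w \<bullet> w - (w \<bullet> e)\<^sup>2"
    using ee by (simp add: inner_diff_left inner_diff_right inner_commute power2_eq_square)
  also have "\<dots> = (norm w)\<^sup>2 - (w \<bullet> e)\<^sup>2" by (simp add: power2_norm_eq_inner)
  also have "\<dots> \<le> (norm w)\<^sup>2" by simp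
  finally show ?thesis by (simp add: power2_le_iff_abs_le)
qed

lemma meas_img_cball:
  fixes f :: "'a::euclidean_space \<Rightarrow> 'a"
  assumes "linear f" "\<rho> > 0"
  shows "measure lebesgue ((\<lambda>v. c0 + f v) ` cball z \<rho>)
         = \<rho> ^ DIM('a) * measure lebesgue ((\<lambda>v. c0 + f v) ` cball 0 1)"
proof -
  have eq: "(\<lambda>v. c0 + f v) ` cball z \<rho> =
        (\<lambda>x. \<rho> *\<^sub>R x + (c0 + f z - \<rho> *\<^sub>R c0)) ` ((\<lambda>v. c0 + f v) ` cball 0 1)"
  proof (rule set_eqI, rule iffI)
    fix w assume "w \<in> (\<lambda>v. c0 + f v) ` cball z \<rho>"
    then obtain v where v: "v \<in> cball z \<rho>" "w = c0 + f v" by auto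
    define u where "u = (1/\<rho>) *\<^sub>R (v - z)"
    have "norm u = \<bar>1/\<rho>\<bar> * norm (v - z)" unfolding u_def by (rule norm_scaleR)
    hence "\<rho> * norm u \<le> \<rho> * 1" using v assms by (simp add: dist_norm norm_minus_commute field_simps)
    hence "norm u \<le> 1" using assms(2) by (rule mult_left_le_imp_le)
    moreover have "v = z + \<rho> *\<^sub>R u" using assms by (simp add: u_def)
    ultimately show "w \<in> (\<lambda>x. \<rho> *\<^sub>R x + (c0 + f z - \<rho> *\<^sub>R c0)) ` ((\<lambda>v. c0 + f v) ` cball 0 1)"
      using v assms(1) by (auto simp: image_iff linear_add linear_scale algebra_simps intro!: bexI[of _ u])
  next
    fix w assume "w \<in> (\<lambda>x. \<rho> *\<^sub>R x + (c0 + f z - \<rho> *\<^sub>R c0)) ` ((\<lambda>v. c0 + f v) ` cball 0 1)"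
    then obtain u where u: "norm u \<le> 1" "w = \<rho> *\<^sub>R (c0 + f u) + (c0 + f z - \<rho> *\<^sub>R c0)" by auto
    have "z + \<rho> *\<^sub>R u \<in> cball z \<rho>" using u assms by (simp add: dist_norm)
    moreover have "w = c0 + f (z + \<rho> *\<^sub>R u)" using u assms(1)
      by (simp add: linear_add linear_scale algebra_simps)
    ultimately show "w \<in> (\<lambda>v. c0 + f v) ` cball z \<rho>" by auto
  qed
  show ?thesis using assms unfolding eq by (simp add: measure_lebesgue_affine)
qed

lemma compact_affine_img:
  fixes h :: "'a::euclidean_space \<Rightarrow> 'b::euclidean_space"
  assumes "linear h" "compact S"
  shows "compact ((\<lambda>v. a + h v) ` S)"
proof -
  have "continuous_on S (\<lambda>v. a + h v)"
    using assms(1) by (intro continuous_intros linear_continuous_on) (simp add: linear_conv_bounded_linear)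
  thus ?thesis using assms(2) compact_continuous_image by blast
qed

lemma john_core:
  fixes M E :: "'a::euclidean_space set" and p :: 'a
  assumes cvx: "convex M"
    and sym: "\<And>x. x \<in> M \<Longrightarrow> 2 *\<^sub>R p - x \<in> M"
    and r: "r > 0" "cball p r \<subseteq> M"
    and mx: "max_vol_ellipsoid_in E M"
  shows "ball p (r / 4 ^ (DIM('a) + 1)) \<subseteq> E"
proof -
  define N where "N = DIM('a)"
  define B where "B = cball (0::'a) 1"
  from mx obtain c0 f where f: "linear f" "inj f" and Edef: "E = (\<lambda>v. c0 + f v) ` B"
    unfolding max_vol_ellipsoid_in_def is_ellipsoid_def B_def by blast
  define T where "T = (\<lambda>v. c0 + f v)"
  have EM: "E \<subseteq> M" using mx unfolding max_vol_ellipsoid_in_def by blast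
  have maxv: "\<And>E'. is_ellipsoid E' \<Longrightarrow> E' \<subseteq> M \<Longrightarrow> measure lebesgue E' \<le> measure lebesgue E"
    using mx unfolding max_vol_ellipsoid_in_def by blast
  define mE where "mE = measure lebesgue E"
  have surj: "surj f" using f by (simp add: linear_injective_imp_surjective)
  have contT: "continuous_on UNIV T" unfolding T_def
    using f(1) by (intro continuous_intros linear_continuous_on) (simp add: linear_conv_bounded_linear)
  have Tcomp: "\<And>S. compact S \<Longrightarrow> compact (T ` S)"
    using contT by (meson compact_continuous_image continuous_on_subset subset_UNIV)
  have Tmeas: "\<And>S. compact S \<Longrightarrow> T ` S \<in> lmeasurable"
    using Tcomp lmeasurable_compact by blast
  have Tinj: "inj T" using f(2) unfolding T_def inj_def by auto
  have fact0: "\<And>z \<rho>. \<rho> > 0 \<Longrightarrow> measure lebesgue (T ` cball z \<rho>) = \<rho> ^ N * mE"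
    unfolding T_def mE_def Edef B_def N_def using meas_img_cball[OF f(1)] by blast
  have ellip: "\<And>a g. linear g \<Longrightarrow> inj g \<Longrightarrow> is_ellipsoid ((\<lambda>v. a + f (g v)) ` B)"
  proof -
    fix a and g :: "'a \<Rightarrow> 'a" assume g: "linear g" "inj g"
    show "is_ellipsoid ((\<lambda>v. a + f (g v)) ` B)"
      unfolding is_ellipsoid_def B_def
      by (rule exI[of _ a], rule exI[of _ "f \<circ> g"])
         (use f g in \<open>auto simp: linear_compose inj_compose\<close>)
  qed
  have mEpos: "mE > 0"
  proof -
    have "cball p r = (\<lambda>v. p + r *\<^sub>R v) ` B"
      unfolding B_def using r(1) by (simp add: cball_scale image_image[symmetric])
    hence "is_ellipsoid (cball p r)"
      unfolding is_ellipsoid_def B_def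
      by (intro exI[of _ p] exI[of _ "\<lambda>v. r *\<^sub>R v"]) (use r in \<open>auto simp: inj_def linear_scale_self\<close>)
    hence "measure lebesgue (cball p r) \<le> mE" using maxv r unfolding mE_def by blast
    moreover have "measure lebesgue (cball p r) > 0"
      using content_cball_pos[OF r(1), of p] by simp
    ultimately show ?thesis by linarith
  qed
  have c0p: "c0 = p"
  proof (rule ccontr)
    assume ne: "c0 \<noteq> p"
    obtain p' where p': "f p' = p - c0" using surj by (metis surjD)
    have p'0: "p' \<noteq> 0" using p' ne f(1) linear_0 by force
    define \<delta> where "\<delta> = norm p'"
    have dpos: "\<delta> > 0" using p'0 by (simp add: \<delta>_def)
    define e where "e = (1/\<delta>) *\<^sub>R p'"
    have ne1: "norm e = 1" using dpos by (simp add: e_def \<delta>_def)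
    have ee: "e \<bullet> e = 1" using ne1 by (simp add: norm_eq_1)
    have p'e: "p' = \<delta> *\<^sub>R e" using dpos by (simp add: e_def)
    define g where "g = (\<lambda>y. y + (\<delta> * (y \<bullet> e)) *\<^sub>R e)"
    have glin: "linear g" unfolding g_def
      by (auto simp: linear_iff inner_add_left algebra_simps)
    have ginj: "inj g"
    proof -
      have "y = 0" if "g y = 0" for y
      proof -
        have "g y \<bullet> e = (1 + \<delta>) * (y \<bullet> e)" using ee by (simp add: g_def inner_add_left algebra_simps)
        hence "y \<bullet> e = 0" using that dpos by simp
        thus "y = 0" using that by (simp add: g_def)
      qed
      thus ?thesis using glin linear_injective_0 by blast
    qed
    have gsurj: "surj g" using glin ginj by (simp add: linear_injective_imp_surjective)
    define Es where "Es = (\<lambda>v. (c0 + f p') + f (g v)) ` B"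
    have Esell: "is_ellipsoid Es" unfolding Es_def using ellip glin ginj by blast
    have Escomp: "compact Es" unfolding Es_def B_def
      by (rule compact_affine_img) (use f(1) glin in \<open>auto intro: linear_compose[unfolded o_def]\<close>)
    have Es_eq: "Es = T ` ((\<lambda>y. p' + g y) ` B)"
      unfolding Es_def T_def image_image using f(1) by (simp add: linear_add add.assoc)
    define F where "F = f e"
    have fp': "f p' = \<delta> *\<^sub>R F" unfolding F_def p'e using f(1) by (simp add: linear_scale)
    have pF: "p = c0 + \<delta> *\<^sub>R F" using p' fp' by (simp add: algebra_simps)
    have EsM: "Es \<subseteq> M"
    proof
      fix w assume "w \<in> Es"
      then obtain v where v: "v \<in> B" "w = (c0 + f p') + f (g v)" unfolding Es_def by auto
      have nv: "norm v \<le> 1" using v(1) by (simp add: B_def)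
      have "\<bar>v \<bullet> e\<bar> \<le> norm v * norm e" by (rule Cauchy_Schwarz_ineq2)
      hence ve: "\<bar>v \<bullet> e\<bar> \<le> 1" using nv ne1 by simp
      define s where "s = (1 + v \<bullet> e) / 2"
      have s01: "0 \<le> s" "s \<le> 1" using ve by (auto simp: s_def)
      have m1: "T v \<in> M" using v(1) EM unfolding Edef T_def by auto
      have "T (- v) \<in> E" using v(1) unfolding Edef T_def B_def by auto
      hence m2: "2 *\<^sub>R p - T (- v) \<in> M" using EM sym by blast
      have fg: "f (g v) = f v + (\<delta> * (v \<bullet> e)) *\<^sub>R F"
        unfolding g_def F_def using f(1) by (simp add: linear_add linear_scale)
      have fm: "f (- v) = - f v" using f(1) by (simp add: linear_neg)
      have e1: "2 *\<^sub>R p - T (- v) = T v + (2 * \<delta>) *\<^sub>R F"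
        unfolding T_def fm pF by (simp add: algebra_simps scaleR_2)
      have e2: "(1 - s) *\<^sub>R T v + s *\<^sub>R (T v + (2 * \<delta>) *\<^sub>R F) = T v + (s * (2 * \<delta>)) *\<^sub>R F"
        by (simp add: algebra_simps)
      have e3: "s * (2 * \<delta>) = \<delta> + \<delta> * (v \<bullet> e)" unfolding s_def by (simp add: algebra_simps)
      have "w = T v + (\<delta> + \<delta> * (v \<bullet> e)) *\<^sub>R F"
        unfolding v(2) fg fp' T_def by (simp add: scaleR_add_left algebra_simps)
      hence "w = (1 - s) *\<^sub>R T v + s *\<^sub>R (2 *\<^sub>R p - T (- v))"
        using e1 e2 e3 by simp
      thus "w \<in> M" using convexD[OF cvx m1 m2, of "1 - s" s] s01 by simp
    qed
    have Es_le: "measure lebesgue Es \<le> mE" using maxv[OF Esell EsM] unfolding mE_def .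
    have BgB: "B \<subseteq> g ` B"
    proof
      fix w assume w: "w \<in> B"
      define t where "t = \<delta> / (1 + \<delta>)"
      have t01: "0 \<le> t" "t \<le> 1" using dpos by (auto simp: t_def)
      define y where "y = w - (t * (w \<bullet> e)) *\<^sub>R e"
      have yc: "y = (1 - t) *\<^sub>R w + t *\<^sub>R (w - (w \<bullet> e) *\<^sub>R e)"
        unfolding y_def by (simp add: algebra_simps)
      have "norm y \<le> (1 - t) * norm w + t * norm (w - (w \<bullet> e) *\<^sub>R e)"
        unfolding yc using t01 by (metis (no_types, lifting) abs_of_nonneg diff_ge_0_iff_ge norm_scaleR norm_triangle_ineq)
      also have "\<dots> \<le> (1 - t) * norm w + t * norm w"
        using perp_norm_le[OF ne1, of w] t01 by (simp add: mult_left_mono)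
      also have "\<dots> \<le> 1" using w t01 by (simp add: B_def algebra_simps)
      finally have ny: "y \<in> B" by (simp add: B_def)
      have ye: "y \<bullet> e = (1 - t) * (w \<bullet> e)" unfolding y_def by (simp add: inner_diff_left ee algebra_simps)
      have dt: "\<delta> * (1 - t) = t" unfolding t_def using dpos by (simp add: field_simps)
      have "g y = y + (\<delta> * ((1 - t) * (w \<bullet> e))) *\<^sub>R e" unfolding g_def ye ..
      also have "\<delta> * ((1 - t) * (w \<bullet> e)) = t * (w \<bullet> e)" using dt by (simp add: mult.assoc[symmetric])
      finally have "g y = w" unfolding y_def by simp
      thus "w \<in> g ` B" using ny by blast
    qed
    define U where "U = g ` ball 0 1 - cball 0 1"
    have Uopen: "open U" unfolding U_def
      by (intro open_Diff open_surjective_linear_image glin gsurj) auto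
    define z where "z = (1 + \<delta> / 2) *\<^sub>R e"
    have zU: "z \<in> U"
    proof -
      define y0 where "y0 = ((1 + \<delta> / 2) / (1 + \<delta>)) *\<^sub>R e"
      have "norm y0 = (1 + \<delta> / 2) / (1 + \<delta>)" unfolding y0_def using ne1 dpos by simp
      moreover have "(1 + \<delta> / 2) / (1 + \<delta>) < 1" using dpos by (simp add: divide_less_eq_1)
      ultimately have "norm y0 < 1" by simp
      moreover have "g y0 = z"
      proof -
        define k where "k = (1 + \<delta> / 2) / (1 + \<delta>)"
        have "g y0 = (k + \<delta> * k) *\<^sub>R e" unfolding g_def y0_def k_def[symmetric]
          by (simp add: ee scaleR_add_left)
        also have "k + \<delta> * k = k * (1 + \<delta>)" by (simp add: algebra_simps)
        also have "\<dots> = 1 + \<delta> / 2" unfolding k_def using dpos by simp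
        finally show ?thesis unfolding z_def .
      qed
      moreover have "norm z > 1" unfolding z_def using ne1 dpos by simp
      ultimately have "z \<in> g ` ball 0 1" "z \<notin> cball 0 1" by (auto intro!: image_eqI[of _ _ y0])
      thus ?thesis unfolding U_def by blast
    qed
    obtain \<rho> where rho: "\<rho> > 0" "cball z \<rho> \<subseteq> U" using Uopen zU open_contains_cball by blast
    define A1 where "A1 = T ` cball p' 1"
    define A2 where "A2 = T ` cball (p' + z) \<rho>"
    have A1s: "A1 \<subseteq> Es"
    proof
      fix w assume "w \<in> A1"
      then obtain a where a: "a \<in> cball p' 1" "w = T a" unfolding A1_def by auto
      have "a - p' \<in> B" using a(1) by (simp add: B_def dist_norm norm_minus_commute)
      hence "a - p' \<in> g ` B" by (rule subsetD[OF BgB])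
      then obtain y where "y \<in> B" "g y = a - p'" by (rule imageE) simp
      hence "a \<in> (\<lambda>y. p' + g y) ` B" by (auto intro!: image_eqI[of _ _ y])
      thus "w \<in> Es" unfolding Es_eq a(2) by (rule imageI)
    qed
    have A2s: "A2 \<subseteq> Es"
    proof
      fix w assume "w \<in> A2"
      then obtain a where a: "a \<in> cball (p' + z) \<rho>" "w = T a" unfolding A2_def by auto
      have "a - p' \<in> cball z \<rho>" using a(1) by (simp add: dist_norm algebra_simps)
      hence "a - p' \<in> g ` ball 0 1" using rho(2) unfolding U_def by blast
      then obtain y where "y \<in> ball 0 1" "g y = a - p'" by (rule imageE) simp
      hence "y \<in> B" "g y = a - p'" unfolding B_def by auto
      hence "a \<in> (\<lambda>y. p' + g y) ` B" by (auto intro!: image_eqI[of _ _ y])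
      thus "w \<in> Es" unfolding Es_eq a(2) by (rule imageI)
    qed
    have disj: "A1 \<inter> A2 = {}"
    proof -
      have "cball p' 1 \<inter> cball (p' + z) \<rho> = {}"
      proof (rule ccontr)
        assume "cball p' 1 \<inter> cball (p' + z) \<rho> \<noteq> {}"
        then obtain a where a: "a \<in> cball p' 1" "a \<in> cball (p' + z) \<rho>" by blast
        have "a - p' \<in> cball z \<rho>" using a(2) by (simp add: dist_norm algebra_simps)
        moreover have "a - p' \<in> cball 0 1" using a(1) by (simp add: dist_norm norm_minus_commute)
        ultimately show False using rho(2) unfolding U_def by blast
      qed
      thus ?thesis unfolding A1_def A2_def by (simp add: image_Int[OF Tinj, symmetric])
    qed
    have mA1: "measure lebesgue A1 = mE" unfolding A1_def using fact0[of 1 p'] by simp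
    have mA2: "measure lebesgue A2 = \<rho> ^ N * mE" unfolding A2_def using fact0[OF rho(1)] by simp
    have A1m: "A1 \<in> lmeasurable" unfolding A1_def by (rule Tmeas) simp
    have A2m: "A2 \<in> lmeasurable" unfolding A2_def by (rule Tmeas) simp
    have "measure lebesgue (A1 \<union> A2) = mE + \<rho> ^ N * mE"
    proof -
      have e1: "emeasure lebesgue A1 \<noteq> \<infinity>" "A1 \<in> sets lebesgue" using A1m by (auto simp: fmeasurable_def)
      have e2: "emeasure lebesgue A2 \<noteq> \<infinity>" "A2 \<in> sets lebesgue" using A2m by (auto simp: fmeasurable_def)
      show ?thesis using measure_Union[OF e1(1) e2(1) e1(2) e2(2) disj] mA1 mA2 by simp
    qed
    moreover have "measure lebesgue (A1 \<union> A2) \<le> measure lebesgue Es"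
      using A1s A2s A1m A2m Escomp lmeasurable_compact by (intro measure_mono_fmeasurable) auto
    moreover have "\<rho> ^ N * mE > 0" using rho(1) mEpos by simp
    ultimately show False using Es_le by linarith
  qed
  define \<kappa> :: real where "\<kappa> = 4 ^ (N + 1)"
  have kpos: "\<kappa> \<ge> 4" unfolding \<kappa>_def by (simp add: one_le_power)
  have T_conv: "\<And>l u w. T ((1 - l) *\<^sub>R u + l *\<^sub>R w) = (1 - l) *\<^sub>R T u + l *\<^sub>R T w"
  proof -
    fix l u w
    have "T ((1 - l) *\<^sub>R u + l *\<^sub>R w) = c0 + ((1 - l) *\<^sub>R f u + l *\<^sub>R f w)"
      unfolding T_def by (simp only: linear_add[OF f(1)] linear_scale[OF f(1)])
    thus "T ((1 - l) *\<^sub>R u + l *\<^sub>R w) = (1 - l) *\<^sub>R T u + l *\<^sub>R T w"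
      unfolding T_def by (simp add: algebra_simps)
  qed
  show ?thesis
  proof
    fix y assume y: "y \<in> ball p (r / 4 ^ (DIM('a) + 1))"
    hence ny: "norm (y - p) < r / \<kappa>" by (simp add: \<kappa>_def N_def dist_norm norm_minus_commute)
    define x where "x = p + \<kappa> *\<^sub>R (y - p)"
    have "norm (x - p) = \<kappa> * norm (y - p)" using kpos by (simp add: x_def)
    also have "\<dots> < \<kappa> * (r / \<kappa>)" using ny kpos by (intro mult_strict_left_mono) auto
    also have "\<dots> = r" using kpos by simp
    finally have "x \<in> cball p r" by (simp add: dist_norm norm_minus_commute)
    hence xM: "x \<in> M" using r(2) by blast
    obtain x' where fx': "f x' = x - p" using surj by (metis surjD)
    have Tx': "T x' = x" unfolding T_def fx' c0p by simp
    have Tmx': "T (- x') = 2 *\<^sub>R p - x" unfolding T_def using f(1) fx' c0p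
      by (simp add: linear_neg algebra_simps scaleR_2)
    have nx': "norm x' < \<kappa>"
    proof (rule ccontr)
      assume "\<not> norm x' < \<kappa>"
      define R where "R = norm x'"
      have RK: "R \<ge> \<kappa>" using \<open>\<not> norm x' < \<kappa>\<close> by (simp add: R_def)
      hence Rpos: "R > 0" "R \<ge> 4" using kpos by auto
      define e where "e = (1/R) *\<^sub>R x'"
      have ne1: "norm e = 1" using Rpos by (simp add: e_def R_def)
      have ee: "e \<bullet> e = 1" using ne1 by (simp add: norm_eq_1)
      have x'e: "x' = R *\<^sub>R e" using Rpos by (simp add: e_def)
      define cR where "cR = (R - 1) / 2"
      define h where "h = (\<lambda>y. (1/2) *\<^sub>R y + (cR * (y \<bullet> e)) *\<^sub>R e)"
      have hlin: "linear h" unfolding h_def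
        by (auto simp: linear_iff inner_add_left algebra_simps)
      have he: "\<And>v. h v \<bullet> e = R / 2 * (v \<bullet> e)"
      proof -
        fix v
        have "h v \<bullet> e = (1/2) * (v \<bullet> e) + cR * (v \<bullet> e)" unfolding h_def by (simp add: inner_add_left ee)
        thus "h v \<bullet> e = R / 2 * (v \<bullet> e)" unfolding cR_def by (simp add: field_simps)
      qed
      have hinj: "inj h"
      proof -
        have "v = 0" if "h v = 0" for v
        proof -
          have "v \<bullet> e = 0" using he[of v] that Rpos by simp
          thus "v = 0" using that by (simp add: h_def)
        qed
        thus ?thesis using hlin linear_injective_0 by blast
      qed
      define G where "G = (\<lambda>v. c0 + f (h v)) ` B"
      have Gell: "is_ellipsoid G" unfolding G_def using ellip hlin hinj by blast
      have Gcomp: "compact G" unfolding G_def B_def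
        by (rule compact_affine_img) (use f(1) hlin in \<open>auto intro: linear_compose[unfolded o_def]\<close>)
      have G_eq: "G = T ` (h ` B)" unfolding G_def T_def image_image ..
      have GM: "G \<subseteq> M"
      proof
        fix w assume "w \<in> G"
        then obtain v where v: "v \<in> B" "w = T (h v)" unfolding G_eq by auto
        have nv: "norm v \<le> 1" using v(1) by (simp add: B_def)
        define a where "a = v \<bullet> e"
        have "\<bar>a\<bar> \<le> norm v * norm e" unfolding a_def by (rule Cauchy_Schwarz_ineq2)
        hence va: "\<bar>a\<bar> \<le> 1" using nv ne1 by simp
        define P where "P = v - a *\<^sub>R e"
        have nP: "norm P \<le> 1" unfolding P_def a_def using perp_norm_le[OF ne1, of v] nv by linarith
        define l where "l = \<bar>a\<bar> / 2"
        have l01: "0 \<le> l" "l \<le> 1/2" using va by (auto simp: l_def)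
        define \<sigma> where "\<sigma> = (if a \<ge> 0 then x' else - x')"
        have sM: "T \<sigma> \<in> M" using xM sym[OF xM] by (simp add: \<sigma>_def Tx' Tmx')
        have ls: "l *\<^sub>R \<sigma> = (R * a / 2) *\<^sub>R e" unfolding \<sigma>_def l_def x'e by (auto simp: abs_if)
        define u where "u = (1 / (1 - l)) *\<^sub>R ((1/2) *\<^sub>R P)"
        have "norm u = (1 / (1 - l)) * ((1/2) * norm P)" using l01 by (simp add: u_def)
        also have "\<dots> \<le> (1 / (1 - l)) * (1/2)" using nP l01 by (intro mult_left_mono) auto
        also have "\<dots> \<le> 1" using l01 by (simp add: field_simps)
        finally have nu: "norm u \<le> 1" .
        have uE: "T u \<in> M" using nu EM unfolding Edef T_def B_def by auto
        have hv1: "h v = (1/2) *\<^sub>R P + ((a/2) *\<^sub>R e + (cR * a) *\<^sub>R e)"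
          unfolding h_def P_def a_def by (simp add: algebra_simps)
        have hv2: "a/2 + cR * a = R * a / 2" unfolding cR_def by (simp add: field_simps)
        have hv: "h v = (1/2) *\<^sub>R P + (R * a / 2) *\<^sub>R e"
          unfolding hv1 scaleR_add_left[symmetric] hv2 ..
        have "(1 - l) *\<^sub>R u = (1/2) *\<^sub>R P" using l01 by (simp add: u_def)
        hence "h v = (1 - l) *\<^sub>R u + l *\<^sub>R \<sigma>" using hv ls by simp
        hence "w = (1 - l) *\<^sub>R T u + l *\<^sub>R T \<sigma>" using v(2) T_conv by simp
        thus "w \<in> M" using convexD[OF cvx uE sM, of "1 - l" l] l01 by simp
      qed
      have G_le: "measure lebesgue G \<le> mE" using maxv[OF Gell GM] unfolding mE_def .
      define K :: nat where "K = 4 ^ N + 1"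
      define C where "C = (\<lambda>i::nat. T ` cball (real i *\<^sub>R e) (1/4))"
      have CG: "C i \<subseteq> G" if i: "i < K" for i
      proof -
        have "cball (real i *\<^sub>R e) (1/4) \<subseteq> h ` B"
        proof
          fix v assume v: "v \<in> cball (real i *\<^sub>R e) (1/4)"
          define w where "w = v - real i *\<^sub>R e"
          have nw: "norm w \<le> 1/4" using v by (simp add: w_def dist_norm norm_minus_commute)
          define y' where "y' = 2 *\<^sub>R (v - (v \<bullet> e) *\<^sub>R e) + (2 / R * (v \<bullet> e)) *\<^sub>R e"
          have y'e: "y' \<bullet> e = 2 / R * (v \<bullet> e)"
            unfolding y'_def by (simp add: inner_add_left inner_diff_left ee)
          have "h y' = v"
          proof -
            define t where "t = v \<bullet> e"
            have h1: "(1/2) *\<^sub>R y' = (v - t *\<^sub>R e) + ((1/R) * t) *\<^sub>R e"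
              unfolding y'_def t_def by (simp add: algebra_simps)
            have h2: "(1/R) * t + cR * (2 / R * t) = t" unfolding cR_def using Rpos by (simp add: field_simps)
            have "h y' = (v - t *\<^sub>R e) + (((1/R) * t) *\<^sub>R e + (cR * (2 / R * t)) *\<^sub>R e)"
              unfolding h_def y'e h1 t_def by (simp add: algebra_simps)
            also have "\<dots> = v" unfolding scaleR_add_left[symmetric] h2 by simp
            finally show ?thesis .
          qed
          moreover have ny': "norm y' \<le> 1"
          proof -
            have perp: "v - (v \<bullet> e) *\<^sub>R e = w - (w \<bullet> e) *\<^sub>R e"
              unfolding w_def by (simp add: inner_diff_left ee algebra_simps)
            have n1: "norm (2 *\<^sub>R (v - (v \<bullet> e) *\<^sub>R e)) \<le> 1/2"
              unfolding perp using perp_norm_le[OF ne1, of w] nw by simp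
            have "\<bar>v \<bullet> e\<bar> \<le> real i + 1/4"
            proof -
              have "v \<bullet> e = real i + w \<bullet> e" unfolding w_def by (simp add: inner_diff_left ee)
              moreover have "\<bar>w \<bullet> e\<bar> \<le> norm w * norm e" by (rule Cauchy_Schwarz_ineq2)
              hence "\<bar>w \<bullet> e\<bar> \<le> 1/4" using nw ne1 by simp
              ultimately show ?thesis by (smt (verit) of_nat_0_le_iff)
            qed
            moreover have "real i \<le> R / 4"
            proof -
              have "real i \<le> 4 ^ N" using i by (simp add: K_def)
              also have "\<dots> = \<kappa> / 4" by (simp add: \<kappa>_def)
              finally show ?thesis using RK by linarith
            qed
            ultimately have ve: "\<bar>v \<bullet> e\<bar> \<le> R / 4 + 1/4" by linarith
            have "norm ((2 / R * (v \<bullet> e)) *\<^sub>R e) = 2 / R * \<bar>v \<bullet> e\<bar>" using ne1 Rpos by simp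
            also have "\<dots> \<le> 2 / R * (R / 4 + 1/4)" using ve Rpos by (intro mult_left_mono) auto
            also have "\<dots> = 1/2 + 1 / (2 * R)" using Rpos by (simp add: field_simps)
            also have "\<dots> \<le> 5/8" using Rpos by (simp add: field_simps)
            finally have n2: "norm ((2 / R * (v \<bullet> e)) *\<^sub>R e) \<le> 5/8" .
            have orth: "orthogonal (2 *\<^sub>R (v - (v \<bullet> e) *\<^sub>R e)) ((2 / R * (v \<bullet> e)) *\<^sub>R e)"
              unfolding orthogonal_def by (simp add: inner_diff_left ee)
            have "(norm y')\<^sup>2 = (norm (2 *\<^sub>R (v - (v \<bullet> e) *\<^sub>R e)))\<^sup>2 + (norm ((2 / R * (v \<bullet> e)) *\<^sub>R e))\<^sup>2"
              unfolding y'_def by (rule norm_add_Pythagorean[OF orth])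
            also have "\<dots> \<le> (1/2)\<^sup>2 + (5/8)\<^sup>2"
              using n1 n2 by (intro add_mono power_mono) auto
            also have "\<dots> \<le> 1\<^sup>2" by (simp add: power2_eq_square)
            finally have "(norm y')\<^sup>2 \<le> 1\<^sup>2" .
            thus ?thesis by (rule power2_le_imp_le) simp
          qed
          ultimately show "v \<in> h ` B" unfolding B_def by (intro image_eqI[of _ _ y']) auto
        qed
        thus ?thesis unfolding C_def G_eq by blast
      qed
      have Cdisj: "pairwise (\<lambda>i j. disjnt (C i) (C j)) {..<K}"
      proof (rule pairwiseI)
        fix i j assume ij: "i \<in> {..<K}" "j \<in> {..<K}" "i \<noteq> j"
        have "cball (real i *\<^sub>R e) (1/4) \<inter> cball (real j *\<^sub>R e) (1/4) = {}"
        proof (rule ccontr)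
          assume "cball (real i *\<^sub>R e) (1/4) \<inter> cball (real j *\<^sub>R e) (1/4) \<noteq> {}"
          then obtain v where "v \<in> cball (real i *\<^sub>R e) (1/4)" "v \<in> cball (real j *\<^sub>R e) (1/4)" by blast
          hence "dist (real i *\<^sub>R e) v \<le> 1/4" "dist (real j *\<^sub>R e) v \<le> 1/4" by auto
          hence "dist (real i *\<^sub>R e) (real j *\<^sub>R e) \<le> 1/2"
            using dist_triangle[of "real i *\<^sub>R e" "real j *\<^sub>R e" v] dist_commute[of "real j *\<^sub>R e" v] by linarith
          moreover have "dist (real i *\<^sub>R e) (real j *\<^sub>R e) = \<bar>real i - real j\<bar>"
            using ne1 by (simp add: dist_norm scaleR_diff_left[symmetric])
          moreover have "\<bar>real i - real j\<bar> \<ge> 1" using ij(3) by (simp add: abs_if)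
          ultimately show False by linarith
        qed
        thus "disjnt (C i) (C j)" unfolding C_def disjnt_def by (simp add: image_Int[OF Tinj, symmetric])
      qed
      have Cm: "C i \<in> lmeasurable" for i unfolding C_def by (rule Tmeas) simp
      have mC: "measure lebesgue (C i) = (1/4) ^ N * mE" for i unfolding C_def using fact0[of "1/4"] by simp
      have "measure lebesgue (\<Union>i\<in>{..<K}. C i) = (\<Sum>i\<in>{..<K}. measure lebesgue (C i))"
        by (rule measure_UNION') (use Cm Cdisj in auto)
      also have "\<dots> = real K * ((1/4) ^ N * mE)" using mC by simp
      finally have mU: "measure lebesgue (\<Union>i\<in>{..<K}. C i) = real K * ((1/4) ^ N * mE)" .
      have "measure lebesgue (\<Union>i\<in>{..<K}. C i) \<le> measure lebesgue G"
      proof (rule measure_mono_fmeasurable)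
        show "(\<Union>i\<in>{..<K}. C i) \<subseteq> G" using CG by blast
        show "(\<Union>i\<in>{..<K}. C i) \<in> sets lebesgue" using Cm by (intro sets.finite_UN) auto
        show "G \<in> lmeasurable" using Gcomp by (rule lmeasurable_compact)
      qed
      hence "real K * ((1/4) ^ N * mE) \<le> mE" using mU G_le by linarith
      moreover have "real K * (1/4) ^ N > 1"
      proof -
        have "real K * (1/4) ^ N = (4 ^ N + 1) / 4 ^ N" by (simp add: K_def power_divide)
        also have "\<dots> > 1" by simp
        finally show ?thesis .
      qed
      hence "1 * mE < (real K * (1/4) ^ N) * mE" using mEpos by (intro mult_strict_right_mono) auto
      ultimately show False by (simp add: mult.assoc)
    qed
    have "f ((1/\<kappa>) *\<^sub>R x') = y - p" using f(1) fx' kpos by (simp add: linear_scale x_def)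
    moreover have "norm ((1/\<kappa>) *\<^sub>R x') \<le> 1" using nx' kpos by simp
    ultimately show "y \<in> E" unfolding Edef B_def c0p by (auto intro!: image_eqI[of _ _ "(1/\<kappa>) *\<^sub>R x'"])
  qed
qed

theorem lemma8:
  fixes lam_c :: real
  assumes "0 < lam_c" and "lam_c < 1"
  shows "\<exists>c>0. \<forall>(n::nat) (a :: nat \<Rightarrow> real^'d) (b :: nat \<Rightarrow> real) (\<epsilon>::real).
           (\<forall>j<n. norm (a j) = 1 \<and> b j > 0) \<longrightarrow>
           bounded {x. \<forall>j<n. a j \<bullet> x \<le> b j} \<longrightarrow>
           diameter {x. \<forall>j<n. a j \<bullet> x \<le> b j} = 1 \<longrightarrow>
           0 \<in> interior {x. \<forall>j<n. a j \<bullet> x \<le> b j} \<longrightarrow>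
           \<epsilon> > 0 \<longrightarrow>
           (\<forall>p \<in> {(x, z). z \<ge> 0 \<and> (\<forall>j<n. z \<le> b j - a j \<bullet> x)}.
              \<forall>E. is_macbeath_ellipsoid lam_c
                     {(x, z). \<forall>j<n. z \<le> b j - a j \<bullet> x + \<epsilon>} p E
                   \<longrightarrow> ball p (c * \<epsilon>) \<subseteq> E)"
proof -
  define \<kappa> :: real where "\<kappa> = 4 ^ (DIM((real^'d) \<times> real) + 1)"
  have kpos: "\<kappa> > 0" unfolding \<kappa>_def by simp
  define c where "c = lam_c / (4 * \<kappa>)"
  have cpos: "c > 0" unfolding c_def using assms(1) kpos by simp
  have main: "ball p (c * \<epsilon>) \<subseteq> E"
    if ab: "\<forall>j<n. norm (a j) = 1 \<and> b j > 0" and ep: "\<epsilon> > 0"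
      and pin: "p \<in> {(x, z). z \<ge> 0 \<and> (\<forall>j<n. z \<le> b j - a j \<bullet> x)}"
      and mE: "is_macbeath_ellipsoid lam_c {(x, z). \<forall>j<n. z \<le> b j - a j \<bullet> x + \<epsilon>} p E"
    for n a b \<epsilon> and p :: "(real^'d) \<times> real" and E
  proof -
    define K :: "((real^'d) \<times> real) set" where "K = {(x, z). \<forall>j<n. z \<le> b j - a j \<bullet> x + \<epsilon>}"
    define V where "V = {v. p + v \<in> K} \<inter> {v. p - v \<in> K}"
    define M where "M = macbeath_region lam_c K p"
    have Meq: "M = (\<lambda>v. p + lam_c *\<^sub>R v) ` V" unfolding M_def V_def macbeath_region_def ..
    have Keq: "K = (\<Inter>j\<in>{..<n}. {w. inner (a j, 1::real) w \<le> b j + \<epsilon>})"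
      unfolding K_def by (auto simp: algebra_simps)
    have cK: "convex K" unfolding Keq by (intro convex_INT convex_halfspace_le)
    have cV: "convex V"
    proof (rule convexI)
      fix u v :: "(real^'d) \<times> real" and s t :: real
      assume uv: "u \<in> V" "v \<in> V" "0 \<le> s" "0 \<le> t" "s + t = 1"
      have "p + (s *\<^sub>R u + t *\<^sub>R v) = s *\<^sub>R (p + u) + t *\<^sub>R (p + v)"
        using uv(5) by (simp add: algebra_simps scaleR_add_left[symmetric])
      moreover have "p - (s *\<^sub>R u + t *\<^sub>R v) = s *\<^sub>R (p - u) + t *\<^sub>R (p - v)"
        using uv(5) by (simp add: algebra_simps scaleR_add_left[symmetric])
      ultimately show "s *\<^sub>R u + t *\<^sub>R v \<in> V"
        using uv convexD[OF cK] unfolding V_def by auto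
    qed
    have cM: "convex M" unfolding Meq using cV by (rule convex_affinity)
    have sym: "2 *\<^sub>R p - x \<in> M" if "x \<in> M" for x
    proof -
      obtain v where v: "v \<in> V" "x = p + lam_c *\<^sub>R v" using \<open>x \<in> M\<close> unfolding Meq by auto
      have "- v \<in> V" using v(1) unfolding V_def by auto
      moreover have "2 *\<^sub>R p - x = p + lam_c *\<^sub>R (- v)" using v(2) by (simp add: algebra_simps scaleR_2)
      ultimately show ?thesis unfolding Meq by blast
    qed
    have rpos: "lam_c * \<epsilon> / 4 > 0" using assms(1) ep by simp
    have ballM: "cball p (lam_c * \<epsilon> / 4) \<subseteq> M"
    proof
      fix x assume x: "x \<in> cball p (lam_c * \<epsilon> / 4)"
      define v where "v = (1 / lam_c) *\<^sub>R (x - p)"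
      have "norm v = (1 / lam_c) * norm (x - p)" unfolding v_def using assms(1) by simp
      also have "\<dots> \<le> (1 / lam_c) * (lam_c * \<epsilon> / 4)"
        using x assms(1) by (intro mult_left_mono) (auto simp: dist_norm norm_minus_commute)
      also have "\<dots> = \<epsilon> / 4" using assms(1) by simp
      finally have nv: "norm v \<le> \<epsilon> / 4" .
      obtain px pz where pp: "p = (px, pz)" by fastforce
      obtain u t where vv: "v = (u, t)" by fastforce
      have nu: "norm u \<le> \<epsilon> / 4" using nv norm_fst_le[of u t] vv by simp
      have nt: "\<bar>t\<bar> \<le> \<epsilon> / 4" using nv norm_snd_le[of t u] vv by simp
      have pz: "\<forall>j<n. pz \<le> b j - a j \<bullet> px" using pin pp by auto
      have au: "\<bar>a j \<bullet> u\<bar> \<le> \<epsilon> / 4" if "j < n" for j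
      proof -
        have "\<bar>a j \<bullet> u\<bar> \<le> norm (a j) * norm u" by (rule Cauchy_Schwarz_ineq2)
        thus ?thesis using ab that nu by simp
      qed
      have "p + v \<in> K" unfolding K_def pp vv
      proof (clarsimp)
        fix j assume j: "j < n"
        show "pz + t \<le> b j - a j \<bullet> (px + u) + \<epsilon>"
        proof -
          have "pz \<le> b j - a j \<bullet> px" using pz j by blast
          moreover have "\<bar>a j \<bullet> u\<bar> \<le> \<epsilon> / 4" using au[OF j] .
          ultimately show ?thesis using nt by (simp add: inner_add_right abs_le_iff)
        qed
      qed
      moreover have "p - v \<in> K" unfolding K_def pp vv
      proof (clarsimp)
        fix j assume j: "j < n"
        show "pz - t \<le> b j - a j \<bullet> (px - u) + \<epsilon>"
        proof -
          have "pz \<le> b j - a j \<bullet> px" using pz j by blast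
          moreover have "\<bar>a j \<bullet> u\<bar> \<le> \<epsilon> / 4" using au[OF j] .
          ultimately show ?thesis using nt by (simp add: inner_diff_right abs_le_iff)
        qed
      qed
      ultimately have "v \<in> V" unfolding V_def by simp
      moreover have "x = p + lam_c *\<^sub>R v" unfolding v_def using assms(1) by simp
      ultimately show "x \<in> M" unfolding Meq by blast
    qed
    have mx: "max_vol_ellipsoid_in E M" using mE unfolding is_macbeath_ellipsoid_def M_def K_def .
    have "ball p ((lam_c * \<epsilon> / 4) / 4 ^ (DIM((real^'d) \<times> real) + 1)) \<subseteq> E"
      by (rule john_core[OF cM sym rpos ballM mx])
    moreover have "(lam_c * \<epsilon> / 4) / 4 ^ (DIM((real^'d) \<times> real) + 1) = c * \<epsilon>"
      unfolding c_def \<kappa>_def by (simp add: field_simps)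
    ultimately show ?thesis by simp
  qed
  show ?thesis using cpos main by blast
qed

end
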